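(* Assume Assumption A. Let $(\sigma_i)_{i\in\mathbb{N}}$ be i.i.d. copies of $\sigma_0$, let $r_n$ be the index of the $n$-th record of this sequence and $\sigma_{(n)}:=\sigma_{r_n}$. Then for each $\varepsilon>0$ there exists $c>0$ such that for all $n\in\mathbb{N}$, \[ \mathbf{P}\big(\log L(\sigma_{(n)})\notin (n(1-\varepsilon),n(1+\varepsilon))\big)<c\,n^{-2}. \] In particular, $\log L(\sigma_{(n)})\sim n$ as $n\to\infty$ almost-surely.
   Context: $\sigma_0$ is a strictly positive random variable under $\mathbf{P}$ and $L(u):=1/\mathbf{P}(\sigma_0>u)$ satisfies $\lim_{u\to\infty}L(uv)/L(u)=1$ for all $v>0$. Records: $r_1:=1$ and $r_{n+1}:=\min\{i>r_n:\sigma_i>\sigma_{r_n}\}$. Assumption A: $L$ is continuous, and there exist functions $g,k$ with $g(u)\to0$ as $u\to\infty$, $g$ eventually monotone decreasing, such that $\lim_{u\to\infty}\big(L(uv)/L(u)-1\big)/g(u)=k(v)$ for every $v>0$, where there exists $v$ with $k(v)\neq0$ and $k(uv)\ne k(u)$ for all $u>0$. *)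

theory Defs
  imports "HOL-Probability.Probability"
begin

definition invtail :: "'a measure \<Rightarrow> ('a \<Rightarrow> real) \<Rightarrow> real \<Rightarrow> real" where
  "invtail M Y u = 1 / measure M {x \<in> space M. Y x > u}"

text \<open>Record indices of a sequence s (indexed from 1): r_1 = 1,
  r_(n+1) = min {i > r_n. s i > s (r_n)}. The value at 0 is a dummy.\<close>
primrec record_idx :: "(nat \<Rightarrow> real) \<Rightarrow> nat \<Rightarrow> nat" where
  "record_idx s 0 = 1"
| "record_idx s (Suc n) =
     (if n = 0 then 1 else (LEAST i. i > record_idx s n \<and> s i > s (record_idx s n)))"

end

theory Submission
  imports Defs "HOL-Probability.Probability"
begin


definition rgood :: "(nat \<Rightarrow> real) \<Rightarrow> bool" where
  "rgood s \<longleftrightarrow> (\<forall>j. \<exists>i>j. s i > s j)"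

lemma rec_step:
  assumes g: "rgood s" and n: "n \<ge> 1"
  shows "record_idx s n < record_idx s (Suc n)"
    "s (record_idx s n) < s (record_idx s (Suc n))"
    "\<And>i. record_idx s n < i \<Longrightarrow> i < record_idx s (Suc n) \<Longrightarrow> s i \<le> s (record_idx s n)"
proof -
  let ?a = "record_idx s n"
  have eq: "record_idx s (Suc n) = (LEAST i. i > ?a \<and> s i > s ?a)" using n by simp
  obtain i where "i > ?a" "s i > s ?a" using g unfolding rgood_def by blast
  hence P: "record_idx s (Suc n) > ?a \<and> s (record_idx s (Suc n)) > s ?a"
    unfolding eq using LeastI[of "\<lambda>i. i > ?a \<and> s i > s ?a" i] by blast
  thus "record_idx s n < record_idx s (Suc n)" "s (record_idx s n) < s (record_idx s (Suc n))" by auto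
  fix i assume "?a < i" "i < record_idx s (Suc n)"
  thus "s i \<le> s ?a" unfolding eq using not_less_Least by force
qed

lemma rec_mono:
  assumes g: "rgood s" and n: "1 \<le> n" "n < m"
  shows "record_idx s n < record_idx s m"
  using n(2)
proof (induction m)
  case (Suc m)
  have "m \<ge> 1" using Suc n by linarith
  from rec_step(1)[OF g this] Suc show ?case by (cases "n = m") auto
qed simp

lemma rec_ge1: assumes g: "rgood s" shows "record_idx s n \<ge> 1"
proof (cases "n \<le> 1")
  case True thus ?thesis by (cases n) auto
next
  case False
  hence "record_idx s 1 < record_idx s n" using rec_mono[OF g, of 1 n] by auto
  thus ?thesis by simp
qed

lemma rec_agree:
  assumes g: "rgood s" "rgood s'" and ag: "\<And>i. i \<le> j \<Longrightarrow> s i = s' i"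
  shows "n \<ge> 1 \<Longrightarrow> record_idx s n \<le> j \<Longrightarrow> record_idx s' n = record_idx s n"
proof (induction n)
  case 0 thus ?case by simp
next
  case (Suc n)
  show ?case
  proof (cases "n = 0")
    case True thus ?thesis by simp
  next
    case False
    hence n1: "n \<ge> 1" by simp
    let ?a = "record_idx s n" and ?b = "record_idx s (Suc n)"
    have ab: "?a < ?b" "s ?a < s ?b" using rec_step[OF g(1) n1] by auto
    have IH: "record_idx s' n = ?a" using Suc.IH n1 ab Suc.prems by linarith
    have eq': "record_idx s' (Suc n) = (LEAST i. i > ?a \<and> s' i > s' ?a)"
      using n1 IH by simp
    have sa: "s' ?a = s ?a" "s' ?b = s ?b" using ag ab Suc.prems by auto
    show ?thesis unfolding eq'
    proof (rule Least_equality)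
      show "?a < ?b \<and> s' ?a < s' ?b" using ab sa by simp
      fix y assume y: "?a < y \<and> s' ?a < s' y"
      show "?b \<le> y"
      proof (rule ccontr)
        assume "\<not> ?b \<le> y"
        hence "y < ?b" by simp
        hence "s y \<le> s ?a" using rec_step(3)[OF g(1) n1] y by blast
        moreover have "s' y = s y" using ag \<open>y < ?b\<close> Suc.prems by auto
        ultimately show False using y sa by simp
      qed
    qed
  qed
qed

lemma rec_agree_iff:
  assumes g: "rgood s" "rgood s'" and ag: "\<And>i. i \<le> j \<Longrightarrow> s i = s' i"
    and n: "n \<ge> 1"
  shows "record_idx s n = j \<longleftrightarrow> record_idx s' n = j"
  using rec_agree[OF g ag n] rec_agree[OF g(2,1) _ n, of j] ag by force

definition extn :: "nat \<Rightarrow> (nat \<Rightarrow> real) \<Rightarrow> nat \<Rightarrow> real" where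
  "extn j y i = (if i \<le> j then y i else real i + (\<Sum>k\<le>j. \<bar>y k\<bar>))"

lemma extn_good: "rgood (extn j y)"
  unfolding rgood_def
proof
  fix l
  show "\<exists>i>l. extn j y l < extn j y i"
  proof (cases "l \<le> j")
    case True
    have "y l \<le> \<bar>y l\<bar>" by simp
    also have "\<dots> \<le> (\<Sum>k\<le>j. \<bar>y k\<bar>)" using True
      by (intro member_le_sum) auto
    finally have "y l < real (Suc j) + (\<Sum>k\<le>j. \<bar>y k\<bar>)" by simp
    thus ?thesis using True by (intro exI[of _ "Suc j"]) (auto simp: extn_def)
  next
    case False thus ?thesis by (intro exI[of _ "Suc l"]) (auto simp: extn_def)
  qed
qed

lemma rec_extn:
  assumes g: "rgood s" and n: "n \<ge> 1"
  shows "record_idx s n = j \<longleftrightarrow> record_idx (extn j s) n = j"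
  by (rule rec_agree_iff[OF g extn_good _ n]) (simp add: extn_def)

lemma measurable_record_idx[measurable]:
  assumes [measurable]: "\<And>i. (\<lambda>x. f x i) \<in> borel_measurable N"
  shows "(\<lambda>x. record_idx (f x) n) \<in> measurable N (count_space UNIV)"
proof (induction n)
  case 0 thus ?case by simp
next
  case (Suc n)
  note [measurable] = Suc
  have [measurable]: "(\<lambda>x. f x (record_idx (f x) n)) \<in> borel_measurable N"
    by (rule measurable_compose_countable'[where I=UNIV]) auto
  show ?case by simp
qed




locale recs = prob_space M for M :: "'a measure" +
  fixes X :: "nat \<Rightarrow> 'a \<Rightarrow> real" and Fb :: "real \<Rightarrow> real"
  assumes rv[measurable]: "\<And>i. X i \<in> borel_measurable M"
  and indep: "indep_vars (\<lambda>_. borel) X UNIV"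
  and ident: "\<And>i. distr M borel (X i) = distr M borel (X 0)"
  and Fb_def: "\<And>u. Fb u = prob {x\<in>space M. X 0 x > u}"
  and Fb_pos: "\<And>u. Fb u > 0"
  and Fb_cont: "continuous_on UNIV Fb"
  and Fb0: "Fb 0 = 1"
begin

lemma probX_gt: "prob {x\<in>space M. X i x > u} = Fb u"
proof -
  have e: "\<And>j. X j -` {u<..} \<inter> space M = {x\<in>space M. X j x > u}" by auto
  have m: "\<And>j. measure (distr M borel (X j)) {u<..} = prob (X j -` {u<..} \<inter> space M)"
    by (rule measure_distr) auto
  have "prob {x\<in>space M. X i x > u} = measure (distr M borel (X i)) {u<..}"
    using m[of i] e[of i] by simp
  also have "\<dots> = measure (distr M borel (X 0)) {u<..}" by (subst ident[of i]) (rule refl)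
  also have "\<dots> = Fb u" unfolding Fb_def using m[of 0] e[of 0] by simp
  finally show ?thesis .
qed

lemma probX_le: "prob {x\<in>space M. X i x \<le> u} = 1 - Fb u"
proof -
  have "{x\<in>space M. X i x \<le> u} = space M - {x\<in>space M. X i x > u}" by auto
  hence "prob {x\<in>space M. X i x \<le> u} = 1 - prob {x\<in>space M. X i x > u}"
    by (simp add: prob_compl)
  thus ?thesis by (simp add: probX_gt)
qed

lemma Fb_mono: "u \<le> v \<Longrightarrow> Fb v \<le> Fb u"
  unfolding Fb_def by (intro finite_measure_mono) auto

lemma Fb_le1: "Fb u \<le> 1" unfolding Fb_def by simp

lemma Fb_small: assumes "p > 0" shows "\<exists>u. Fb u < p"
proof -
  let ?A = "\<lambda>n::nat. {x\<in>space M. X 0 x > real n}"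
  have "(\<lambda>n. prob (?A n)) \<longlonglongrightarrow> prob (\<Inter>n. ?A n)"
    by (rule finite_Lim_measure_decseq) (auto simp: decseq_def)
  moreover have "(\<Inter>n. ?A n) = {}"
  proof safe
    fix x
    obtain n where n: "X 0 x < real n" using reals_Archimedean2 by blast
    assume "x \<in> (\<Inter>n. ?A n)"
    hence "x \<in> ?A n" by blast
    hence "real n < X 0 x" by simp
    with n show "x \<in> {}" by simp
  qed
  ultimately have "(\<lambda>n. Fb (real n)) \<longlonglongrightarrow> 0" by (simp add: Fb_def)
  from order_tendstoD(2)[OF this assms] obtain n where "Fb (real n) < p"
    by (auto simp: eventually_sequentially)
  thus ?thesis by blast
qed

lemma level:
  assumes p: "0 < p" "p \<le> 1"
  shows "\<exists>w. Fb w = p \<and> (\<forall>v. Fb v < p \<longleftrightarrow> w < v)"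
proof -
  let ?S = "{u. p \<le> Fb u}"
  obtain u1 where u1: "Fb u1 < p" using Fb_small p by blast
  have ne: "?S \<noteq> {}" using Fb0 p by (auto intro!: exI[of _ 0])
  have bdd: "bdd_above ?S"
  proof (rule bdd_aboveI)
    fix x assume "x \<in> ?S"
    hence "p \<le> Fb x" by simp
    show "x \<le> u1"
    proof (rule ccontr)
      assume "\<not> x \<le> u1"
      hence "Fb x \<le> Fb u1" using Fb_mono[of u1 x] by simp
      thus False using u1 \<open>p \<le> Fb x\<close> by simp
    qed
  qed
  have cl: "closed ?S"
    using closed_Collect_le[OF continuous_on_const Fb_cont, of p] by simp
  define w where "w = Sup ?S"
  have wS: "p \<le> Fb w" using closed_contains_Sup[OF ne bdd cl] w_def by simp
  have gt: "Fb v < p" if "w < v" for v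
  proof (rule ccontr)
    assume "\<not> Fb v < p"
    hence "v \<in> ?S" by simp
    hence "v \<le> w" unfolding w_def using bdd by (rule cSup_upper)
    thus False using that by simp
  qed
  have "Fb w \<le> p"
  proof (rule ccontr)
    assume "\<not> Fb w \<le> p"
    hence "Fb w > p" by simp
    have "isCont Fb w" using Fb_cont by (simp add: continuous_on_eq_continuous_at)
    hence "(Fb \<longlongrightarrow> Fb w) (at_right w)" by (simp add: isCont_def filterlim_at_split)
    from order_tendstoD(1)[OF this \<open>Fb w > p\<close>]
    obtain b where "w < b" "\<And>v. w < v \<Longrightarrow> v < b \<Longrightarrow> Fb v > p"
      by (auto simp: eventually_at_right_field)
    hence "Fb ((w + b)/2) > p" by auto
    with gt[of "(w + b)/2"] \<open>w < b\<close> show False by auto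
  qed
  hence "Fb w = p" using wS by simp
  moreover have "Fb v < p \<longleftrightarrow> w < v" for v
    using gt Fb_mono[of v w] \<open>Fb w = p\<close> by (cases "w < v") auto
  ultimately show ?thesis by blast
qed

definition Ef :: "real \<Rightarrow> real" where "Ef v = - ln (Fb v)"

lemma Ef_nonneg: "Ef v \<ge> 0"
  unfolding Ef_def using Fb_pos[of v] Fb_le1[of v] by simp

lemma Ef_level:
  assumes "t \<ge> 0"
  shows "\<exists>w. Fb w = exp (- t) \<and> (\<forall>v. t < Ef v \<longleftrightarrow> w < v)"
proof -
  obtain w where w: "Fb w = exp (-t)" "\<And>v. Fb v < exp (-t) \<longleftrightarrow> w < v"
    using level[of "exp (-t)"] assms by auto
  have "t < Ef v \<longleftrightarrow> Fb v < exp (-t)" for v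
  proof -
    have "t < Ef v \<longleftrightarrow> ln (Fb v) < - t" unfolding Ef_def by linarith
    also have "\<dots> \<longleftrightarrow> ln (Fb v) < ln (exp (-t))" by simp
    also have "\<dots> \<longleftrightarrow> Fb v < exp (-t)" using Fb_pos[of v] by (subst ln_less_cancel_iff) auto
    finally show ?thesis .
  qed
  thus ?thesis using w by blast
qed

lemma null_stay_below: "prob {x\<in>space M. \<forall>i>j. X i x \<le> q} = 0"
proof -
  let ?r = "1 - Fb q"
  have r: "0 \<le> ?r" "?r < 1" using Fb_pos[of q] Fb_le1[of q] by auto
  have bnd: "prob {x\<in>space M. \<forall>i>j. X i x \<le> q} \<le> ?r ^ Suc m" for m
  proof -
    let ?J = "{j<..j + Suc m}"
    have "prob {x\<in>space M. \<forall>i>j. X i x \<le> q} \<le> prob (\<Inter>i\<in>?J. X i -` {..q} \<inter> space M)"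
      by (intro finite_measure_mono) auto
    also have "\<dots> = (\<Prod>i\<in>?J. prob (X i -` {..q} \<inter> space M))"
      by (rule indep_varsD[OF indep]) auto
    also have "\<dots> = (\<Prod>i\<in>?J. ?r)"
    proof (intro prod.cong refl)
      fix i
      have "X i -` {..q} \<inter> space M = {x\<in>space M. X i x \<le> q}" by auto
      thus "prob (X i -` {..q} \<inter> space M) = ?r" by (simp add: probX_le)
    qed
    also have "\<dots> = ?r ^ Suc m" by simp
    finally show ?thesis .
  qed
  have "(\<lambda>m. ?r ^ Suc m) \<longlonglongrightarrow> 0"
    by (rule LIMSEQ_Suc[OF LIMSEQ_power_zero]) (use r in auto)
  hence "prob {x\<in>space M. \<forall>i>j. X i x \<le> q} \<le> 0"
    using bnd by (intro tendsto_lowerbound[where F=sequentially]) (auto intro: always_eventually)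
  thus ?thesis using measure_nonneg[of M] by (simp add: antisym)
qed

lemma AE_good: "AE x in M. rgood (\<lambda>i. X i x)"
proof -
  have "AE x in M. \<forall>q::rat. \<forall>j::nat. \<exists>i>j. X i x > real_of_rat q"
  proof (intro AE_all_countable[THEN iffD2] allI)
    fix q :: rat and j :: nat
    have "AE x in M. x \<notin> {x\<in>space M. \<forall>i>j. X i x \<le> real_of_rat q}"
      using null_stay_below[of j "real_of_rat q"] by (subst prob_eq_0[symmetric]) auto
    then have "AE x in M. x \<in> space M \<longrightarrow> (\<exists>i>j. X i x > real_of_rat q)"
      by (rule eventually_mono) (auto simp: not_le)
    then show "AE x in M. \<exists>i>j. X i x > real_of_rat q" by (rule AE_mp[OF AE_space])
  qed
  then show ?thesis
  proof (rule eventually_mono)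
    fix x assume H: "\<forall>q::rat. \<forall>j::nat. \<exists>i>j. X i x > real_of_rat q"
    show "rgood (\<lambda>i. X i x)" unfolding rgood_def
    proof
      fix j
      obtain r where "r \<in> \<rat>" "X j x < r" "r < X j x + 1"
        using Rats_dense_in_real[of "X j x" "X j x + 1"] by auto
      then obtain q where "r = real_of_rat q" by (auto elim: Rats_cases)
      moreover obtain i where "i > j" "real_of_rat q < X i x" using H by blast
      ultimately show "\<exists>i>j. X j x < X i x" using \<open>X j x < r\<close> by (intro exI[of _ i]) auto
    qed
  qed
qed

end



context recs begin

lemma inner:
  "emeasure M {x\<in>space M. (\<forall>k\<in>{1..m}. X (j+k) x \<le> v) \<and> w < X (j+Suc m) x}
     = ennreal ((1 - Fb v)^m * Fb w)"
proof -
  let ?J = "{j<..j+Suc m}"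
  define A where "A i = (if i = j + Suc m then {w<..} else {..v})" for i
  have eq: "{x\<in>space M. (\<forall>k\<in>{1..m}. X (j+k) x \<le> v) \<and> w < X (j+Suc m) x}
      = (\<Inter>i\<in>?J. X i -` A i \<inter> space M)"
  proof (intro set_eqI iffI)
    fix x assume x: "x \<in> {x\<in>space M. (\<forall>k\<in>{1..m}. X (j+k) x \<le> v) \<and> w < X (j+Suc m) x}"
    show "x \<in> (\<Inter>i\<in>?J. X i -` A i \<inter> space M)"
    proof (intro INT_I)
      fix i assume i: "i \<in> ?J"
      show "x \<in> X i -` A i \<inter> space M"
      proof (cases "i = j + Suc m")
        case True thus ?thesis using x by (auto simp: A_def)
      next
        case False
        hence "i - j \<in> {1..m}" "j + (i - j) = i" using i by auto
        hence "X i x \<le> v" using x by (metis (no_types, lifting) mem_Collect_eq)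
        thus ?thesis using x False by (auto simp: A_def)
      qed
    qed
  next
    fix x assume x: "x \<in> (\<Inter>i\<in>?J. X i -` A i \<inter> space M)"
    have "x \<in> space M" using x by auto
    moreover have "X (j+k) x \<le> v" if "k \<in> {1..m}" for k
    proof -
      have "j + k \<in> ?J" "j + k \<noteq> j + Suc m" using that by auto
      hence "x \<in> X (j+k) -` A (j+k) \<inter> space M" using x by blast
      thus ?thesis using \<open>j + k \<noteq> j + Suc m\<close> by (simp add: A_def)
    qed
    moreover have "w < X (j+Suc m) x"
    proof -
      have "j + Suc m \<in> ?J" by simp
      hence "x \<in> X (j+Suc m) -` A (j+Suc m) \<inter> space M" using x by blast
      thus ?thesis by (simp add: A_def)
    qed
    ultimately show "x \<in> {x\<in>space M. (\<forall>k\<in>{1..m}. X (j+k) x \<le> v) \<and> w < X (j+Suc m) x}"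
      by auto
  qed
  have "prob (\<Inter>i\<in>?J. X i -` A i \<inter> space M) = (\<Prod>i\<in>?J. prob (X i -` A i \<inter> space M))"
    by (rule indep_varsD[OF indep]) (auto simp: A_def)
  also have "\<dots> = prob (X (j + Suc m) -` A (j + Suc m) \<inter> space M) *
      (\<Prod>i\<in>{j<..j+m}. prob (X i -` A i \<inter> space M))"
  proof -
    have "?J = insert (j + Suc m) {j<..j+m}" by auto
    thus ?thesis by simp
  qed
  also have "\<dots> = Fb w * (1 - Fb v)^m"
  proof -
    have a: "prob (X (j + Suc m) -` A (j + Suc m) \<inter> space M) = Fb w"
    proof -
      have "X (j + Suc m) -` A (j + Suc m) \<inter> space M = {x\<in>space M. X (j+Suc m) x > w}"
        by (auto simp: A_def)
      thus ?thesis by (simp add: probX_gt)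
    qed
    have b: "prob (X i -` A i \<inter> space M) = 1 - Fb v" if "i \<in> {j<..j+m}" for i
    proof -
      have "X i -` A i \<inter> space M = {x\<in>space M. X i x \<le> v}"
        using that by (auto simp: A_def)
      thus ?thesis by (simp add: probX_le)
    qed
    show ?thesis using a b by simp
  qed
  finally show ?thesis using eq by (simp add: emeasure_eq_measure mult.commute)
qed

end



lemma comp_meas[measurable]:
  fixes I :: "'i set"
  shows "(\<lambda>z. z i) \<in> borel_measurable (PiM I (\<lambda>_. borel :: real measure))"
proof (cases "i \<in> I")
  case True thus ?thesis by simp
next
  case False
  have "(\<lambda>z::'i \<Rightarrow> real. undefined :: real) \<in> borel_measurable (PiM I (\<lambda>_. borel))" by simp
  moreover have "\<And>z. z \<in> space (PiM I (\<lambda>_. borel :: real measure)) \<Longrightarrow> z i = undefined"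
    using False by (auto simp: space_PiM PiE_def extensional_def)
  ultimately show ?thesis
    using measurable_cong[of "PiM I (\<lambda>_. borel :: real measure)" "\<lambda>z. z i" "\<lambda>z. undefined" borel] by simp
qed

lemma extn_meas[measurable]:
  "(\<lambda>y. extn j y i) \<in> borel_measurable (PiM I (\<lambda>_. borel :: real measure))"
  unfolding extn_def by (cases "i \<le> j") simp_all

context recs begin

lemma FUB:
  "emeasure M {x\<in>space M. record_idx (extn j (\<lambda>i. X i x)) n = j \<and>
        (\<forall>k\<in>{1..m}. X (j+k) x \<le> X j x) \<and> max u (X j x) < X (j+Suc m) x}
   = (\<integral>\<^sup>+x. (if record_idx (extn j (\<lambda>i. X i x)) n = j
          then ennreal ((1 - Fb (X j x))^m * Fb (max u (X j x))) else 0) \<partial>M)"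
proof -
  let ?S = "PiM {..j} (\<lambda>_. borel :: real measure)"
  let ?T = "PiM {j<..j+Suc m} (\<lambda>_. borel :: real measure)"
  define Y where "Y x = restrict (\<lambda>i. X i x) {..j}" for x
  define Z where "Z x = restrict (\<lambda>i. X i x) {j<..j+Suc m}" for x
  have ind: "indep_var ?S Y ?T Z" unfolding Y_def Z_def
    by (rule indep_var_restrict[OF indep]) auto
  have Ym[measurable]: "Y \<in> measurable M ?S" using indep_var_rv1[OF ind] .
  have Zm[measurable]: "Z \<in> measurable M ?T" using indep_var_rv2[OF ind] .
  define P1 where "P1 y = (record_idx (extn j y) n = j)" for y :: "nat \<Rightarrow> real"
  have extY: "extn j (Y x) = extn j (\<lambda>i. X i x)" for x
    by (auto simp: extn_def Y_def fun_eq_iff intro!: sum.cong)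
  have P1m[measurable]: "Measurable.pred ?S P1"
    unfolding P1_def by measurable
  define C where "C = {p \<in> space (?S \<Otimes>\<^sub>M ?T). P1 (fst p) \<and>
      (\<forall>k\<in>{1..m}. snd p (j+k) \<le> fst p j) \<and> max u (fst p j) < snd p (j + Suc m)}"
  have Cm[measurable]: "C \<in> sets (?S \<Otimes>\<^sub>M ?T)" unfolding C_def by measurable
  have YZm[measurable]: "(\<lambda>x. (Y x, Z x)) \<in> measurable M (?S \<Otimes>\<^sub>M ?T)" by measurable
  have ev: "{x\<in>space M. record_idx (extn j (\<lambda>i. X i x)) n = j \<and>
        (\<forall>k\<in>{1..m}. X (j+k) x \<le> X j x) \<and> max u (X j x) < X (j+Suc m) x}
      = (\<lambda>x. (Y x, Z x)) -` C \<inter> space M"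
  proof -
    have "(Y x, Z x) \<in> space (?S \<Otimes>\<^sub>M ?T)" if "x \<in> space M" for x
      using measurable_space[OF YZm that] .
    moreover have "Y x j = X j x" "Z x (j + Suc m) = X (j + Suc m) x" for x
      by (simp_all add: Y_def Z_def)
    moreover have "(\<forall>k\<in>{1..m}. Z x (j+k) \<le> Y x j) \<longleftrightarrow> (\<forall>k\<in>{1..m}. X (j+k) x \<le> X j x)" for x
      by (auto simp: Y_def Z_def)
    ultimately show ?thesis unfolding C_def P1_def by (auto simp: extY)
  qed
  interpret Tz: prob_space "distr M ?T Z" using Zm by (rule prob_space_distr)
  have "sets (distr M ?S Y \<Otimes>\<^sub>M distr M ?T Z) = sets (?S \<Otimes>\<^sub>M ?T)"
    by (rule sets_pair_measure_cong) simp_all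
  hence sC: "C \<in> sets (distr M ?S Y \<Otimes>\<^sub>M distr M ?T Z)" using Cm by simp
  have "emeasure M ((\<lambda>x. (Y x, Z x)) -` C \<inter> space M)
      = emeasure (distr M (?S \<Otimes>\<^sub>M ?T) (\<lambda>x. (Y x, Z x))) C"
    by (rule emeasure_distr[symmetric, OF YZm Cm])
  also have "\<dots> = emeasure (distr M ?S Y \<Otimes>\<^sub>M distr M ?T Z) C"
    using ind[unfolded indep_var_distribution_eq] by simp
  also have "\<dots> = (\<integral>\<^sup>+y. emeasure (distr M ?T Z) (Pair y -` C) \<partial>distr M ?S Y)"
    by (rule Tz.emeasure_pair_measure_alt[OF sC])
  also have "\<dots> = (\<integral>\<^sup>+x. emeasure (distr M ?T Z) (Pair (Y x) -` C) \<partial>M)"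
  proof (rule nn_integral_distr)
    show "(\<lambda>y. emeasure (distr M ?T Z) (Pair y -` C)) \<in> borel_measurable (distr M ?S Y)"
      using Tz.measurable_emeasure_Pair[OF sC] by simp
  qed (rule Ym)
  also have "\<dots> = (\<integral>\<^sup>+x. (if record_idx (extn j (\<lambda>i. X i x)) n = j
          then ennreal ((1 - Fb (X j x))^m * Fb (max u (X j x))) else 0) \<partial>M)"
  proof (rule nn_integral_cong)
    fix x assume x: "x \<in> space M"
    have Yx: "Y x \<in> space ?S" using measurable_space[OF Ym x] .
    have "emeasure (distr M ?T Z) (Pair (Y x) -` C) = emeasure M (Z -` (Pair (Y x) -` C) \<inter> space M)"
      by (rule emeasure_distr[OF Zm sets_Pair1[OF Cm]])
    also have "Z -` (Pair (Y x) -` C) \<inter> space M = (if P1 (Y x) then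
        {x'\<in>space M. (\<forall>k\<in>{1..m}. X (j+k) x' \<le> X j x) \<and> max u (X j x) < X (j+Suc m) x'} else {})"
    proof -
      have "(Y x, Z x') \<in> space (?S \<Otimes>\<^sub>M ?T)" if "x' \<in> space M" for x'
        using Yx measurable_space[OF Zm that] by (simp add: space_pair_measure)
      moreover have "(\<forall>k\<in>{1..m}. Z x' (j+k) \<le> Y x j) \<longleftrightarrow> (\<forall>k\<in>{1..m}. X (j+k) x' \<le> X j x)" for x'
        by (auto simp: Y_def Z_def)
      moreover have "Y x j = X j x" "Z x' (j + Suc m) = X (j + Suc m) x'" for x'
        by (simp_all add: Y_def Z_def)
      ultimately show ?thesis unfolding C_def by auto
    qed
    also have "emeasure M (if P1 (Y x) then
        {x'\<in>space M. (\<forall>k\<in>{1..m}. X (j+k) x' \<le> X j x) \<and> max u (X j x) < X (j+Suc m) x'} else {})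
      = (if record_idx (extn j (\<lambda>i. X i x)) n = j
          then ennreal ((1 - Fb (X j x))^m * Fb (max u (X j x))) else 0)"
      by (cases "P1 (Y x)") (simp_all only: inner P1_def extY if_True if_False emeasure_empty refl simp_thms)
    finally show "emeasure (distr M ?T Z) (Pair (Y x) -` C) = (if record_idx (extn j (\<lambda>i. X i x)) n = j
          then ennreal ((1 - Fb (X j x))^m * Fb (max u (X j x))) else 0)" .
  qed
  finally show ?thesis using ev by simp
qed

end



lemma extn_meas2[measurable]:
  assumes [measurable]: "\<And>i. g i \<in> borel_measurable N"
  shows "(\<lambda>x. extn j (\<lambda>i. g i x) k) \<in> borel_measurable N"
  unfolding extn_def by (cases "k \<le> j") simp_all

declare record_idx.simps(2)[simp del]

context recs begin

abbreviation rn where "rn n x \<equiv> record_idx (\<lambda>i. X i x) n"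

lemma Fb_meas[measurable]: "Fb \<in> borel_measurable borel"
  by (rule borel_measurable_continuous_onI[OF Fb_cont])

lemma Ipred[measurable]: "Measurable.pred M (\<lambda>x. record_idx (extn j (\<lambda>i. X i x)) n = j)"
  by measurable

lemma V_meas[measurable]: "(\<lambda>x. X (rn n x) x) \<in> borel_measurable M"
  by (rule measurable_compose_countable'[where I=UNIV]) auto

definition Aset where "Aset u n j m = {x\<in>space M. record_idx (extn j (\<lambda>i. X i x)) n = j \<and>
        (\<forall>k\<in>{1..m}. X (j+k) x \<le> X j x) \<and> max u (X j x) < X (j+Suc m) x}"

lemma Aset_sets[measurable]: "Aset u n j m \<in> sets M"
  unfolding Aset_def by measurable

lemma ind_single:
  assumes g: "rgood (\<lambda>i. X i x)" and x: "x \<in> space M" and n: "n \<ge> 1"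
  shows "indicator {x\<in>space M. u < X (rn (Suc n) x) x} x
     = (\<Sum>j. \<Sum>m. indicator (Aset u n j m) x :: ennreal)"
proof -
  let ?a = "rn n x" and ?b = "rn (Suc n) x"
  have ab: "?a < ?b" "X ?a x < X ?b x" using rec_step[OF g n] by auto
  have mid: "\<And>i. ?a < i \<Longrightarrow> i < ?b \<Longrightarrow> X i x \<le> X ?a x" using rec_step(3)[OF g n] by blast
  have Ij: "record_idx (extn j (\<lambda>i. X i x)) n = j \<longleftrightarrow> j = ?a" for j
    using rec_extn[OF g n, of j] by auto
  define m0 where "m0 = ?b - ?a - 1"
  have m0: "?a + Suc m0 = ?b" using ab unfolding m0_def by simp
  have inner: "(\<Sum>m. indicator (Aset u n ?a m) x :: ennreal) = indicator {y\<in>space M. u < X (rn (Suc n) y) y} x"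
  proof -
    have z: "indicator (Aset u n ?a m) x = (0::ennreal)" if "m \<noteq> m0" for m
    proof (cases "?a + Suc m < ?b")
      case True
      hence "X (?a + Suc m) x \<le> X ?a x" using mid by simp
      thus ?thesis by (auto simp: Aset_def)
    next
      case False
      hence "?b - ?a \<in> {1..m}" using that m0 by auto
      moreover have "X (?a + (?b - ?a)) x > X ?a x" using ab by simp
      ultimately have "x \<notin> Aset u n ?a m" unfolding Aset_def by fastforce
      thus ?thesis by simp
    qed
    have "(\<Sum>m. indicator (Aset u n ?a m) x :: ennreal) = (\<Sum>m\<in>{m0}. indicator (Aset u n ?a m) x)"
      by (rule suminf_finite) (use z in auto)
    also have "\<dots> = indicator (Aset u n ?a m0) x" by simp
    also have "\<dots> = indicator {y\<in>space M. u < X (rn (Suc n) y) y} x"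
    proof -
      have "\<forall>k\<in>{1..m0}. X (?a+k) x \<le> X ?a x" using mid m0 by auto
      hence "x \<in> Aset u n ?a m0 \<longleftrightarrow> u < X ?b x"
        using x ab m0 Ij[of ?a] unfolding Aset_def by auto
      thus ?thesis using x by (auto simp: indicator_def)
    qed
    finally show ?thesis .
  qed
  have zj: "(\<Sum>m. indicator (Aset u n j m) x :: ennreal) = 0" if "j \<noteq> ?a" for j
  proof -
    have "indicator (Aset u n j m) x = (0::ennreal)" for m
      using Ij[of j] that by (auto simp: Aset_def)
    thus ?thesis by simp
  qed
  have "(\<Sum>j. \<Sum>m. indicator (Aset u n j m) x :: ennreal) = (\<Sum>j\<in>{?a}. \<Sum>m. indicator (Aset u n j m) x)"
    by (rule suminf_finite) (use zj in auto)
  thus ?thesis using inner by simp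
qed

lemma geom_ennreal:
  assumes "0 < p" "p \<le> 1" "0 \<le> c"
  shows "(\<Sum>m. ennreal ((1 - p)^m * c)) = ennreal (c / p)"
proof (rule suminf_ennreal_eq)
  show "\<And>i. 0 \<le> (1 - p)^i * c" using assms by simp
  have "(\<lambda>m. (1 - p)^m) sums (1 / (1 - (1 - p)))" by (rule geometric_sums) (use assms in auto)
  hence "(\<lambda>m. (1 - p)^m * c) sums (1 / (1 - (1 - p)) * c)" by (rule sums_mult2)
  thus "(\<lambda>m. (1 - p)^m * c) sums (c / p)" by simp
qed

lemma REC:
  assumes n: "n \<ge> 1"
  shows "emeasure M {x\<in>space M. u < X (rn (Suc n) x) x}
    = (\<integral>\<^sup>+x. ennreal (Fb (max u (X (rn n x) x)) / Fb (X (rn n x) x)) \<partial>M)"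
proof -
  have "emeasure M {x\<in>space M. u < X (rn (Suc n) x) x}
      = (\<integral>\<^sup>+x. indicator {x\<in>space M. u < X (rn (Suc n) x) x} x \<partial>M)"
    by (rule nn_integral_indicator[symmetric]) measurable
  also have "\<dots> = (\<integral>\<^sup>+x. (\<Sum>j. \<Sum>m. indicator (Aset u n j m) x) \<partial>M)"
  proof (rule nn_integral_cong_AE)
    show "AE x in M. indicator {x \<in> space M. u < X (rn (Suc n) x) x} x =
               (\<Sum>j m. indicator (Aset u n j m) x :: ennreal)"
      using AE_good AE_space
    proof eventually_elim
      case (elim x)
      note i = ind_single[OF elim(1) elim(2) n, of u]
      show ?case using i by simp
    qed
  qed
  also have "\<dots> = (\<Sum>j. \<integral>\<^sup>+x. (\<Sum>m. indicator (Aset u n j m) x) \<partial>M)"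
    by (rule nn_integral_suminf) measurable
  also have "\<dots> = (\<Sum>j. \<Sum>m. \<integral>\<^sup>+x. indicator (Aset u n j m) x \<partial>M)"
    by (intro suminf_cong nn_integral_suminf) measurable
  also have "\<dots> = (\<Sum>j. \<Sum>m. \<integral>\<^sup>+x. (if record_idx (extn j (\<lambda>i. X i x)) n = j
          then ennreal ((1 - Fb (X j x))^m * Fb (max u (X j x))) else 0) \<partial>M)"
    by (intro suminf_cong) (simp add: FUB[folded Aset_def])
  also have "\<dots> = (\<Sum>j. \<integral>\<^sup>+x. (\<Sum>m. (if record_idx (extn j (\<lambda>i. X i x)) n = j
          then ennreal ((1 - Fb (X j x))^m * Fb (max u (X j x))) else 0)) \<partial>M)"
    by (intro suminf_cong nn_integral_suminf[symmetric]) measurable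
  also have "\<dots> = (\<Sum>j. \<integral>\<^sup>+x. (if record_idx (extn j (\<lambda>i. X i x)) n = j
          then ennreal (Fb (max u (X j x)) / Fb (X j x)) else 0) \<partial>M)"
  proof (intro suminf_cong nn_integral_cong)
    fix j x
    show "(\<Sum>m. (if record_idx (extn j (\<lambda>i. X i x)) n = j
          then ennreal ((1 - Fb (X j x))^m * Fb (max u (X j x))) else 0)) =
        (if record_idx (extn j (\<lambda>i. X i x)) n = j
          then ennreal (Fb (max u (X j x)) / Fb (X j x)) else 0)"
      using geom_ennreal[OF Fb_pos Fb_le1 less_imp_le[OF Fb_pos]] by simp
  qed
  also have "\<dots> = (\<integral>\<^sup>+x. (\<Sum>j. (if record_idx (extn j (\<lambda>i. X i x)) n = j
          then ennreal (Fb (max u (X j x)) / Fb (X j x)) else 0)) \<partial>M)"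
    by (rule nn_integral_suminf[symmetric]) measurable
  also have "\<dots> = (\<integral>\<^sup>+x. ennreal (Fb (max u (X (rn n x) x)) / Fb (X (rn n x) x)) \<partial>M)"
  proof (rule nn_integral_cong_AE)
    show "AE x in M. (\<Sum>j. (if record_idx (extn j (\<lambda>i. X i x)) n = j
          then ennreal (Fb (max u (X j x)) / Fb (X j x)) else 0)) =
        ennreal (Fb (max u (X (rn n x) x)) / Fb (X (rn n x) x))"
      using AE_good
    proof eventually_elim
      case (elim x)
      have Ij: "record_idx (extn j (\<lambda>i. X i x)) n = j \<longleftrightarrow> j = rn n x" for j
        using rec_extn[OF elim n, of j] by auto
      have "(\<Sum>j. (if record_idx (extn j (\<lambda>i. X i x)) n = j
          then ennreal (Fb (max u (X j x)) / Fb (X j x)) else 0)) =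
          (\<Sum>j\<in>{rn n x}. (if record_idx (extn j (\<lambda>i. X i x)) n = j
          then ennreal (Fb (max u (X j x)) / Fb (X j x)) else 0))"
        by (rule suminf_finite) (auto simp: Ij)
      thus ?case by (simp add: Ij)
    qed
  qed
  finally show ?thesis .
qed

end



lemma erlang_CDF_le1: "erlang_CDF k 1 a \<le> 1"
  unfolding erlang_CDF_def by (auto intro!: sum_nonneg)

lemma ICOMP:
  assumes a: "0 \<le> a"
  shows "(\<integral>\<^sup>+s. ennreal (erlang_density k 1 s) * ennreal (min 1 (exp (s - a))) \<partial>lborel)
     = ennreal (1 - erlang_CDF k 1 a + exp (-a) * a^(Suc k) / fact (Suc k))"
proof -
  let ?D = "density lborel (erlang_density k 1)"
  interpret D: prob_space ?D by (rule prob_space_erlang_density) simp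
  have split: "ennreal (erlang_density k 1 s) * ennreal (min 1 (exp (s - a)))
      = ennreal (erlang_density k 1 s) * indicator {a<..} s
        + ennreal (exp (-a) * s^k / fact k) * indicator {0..a} s" for s
  proof (cases "s < 0")
    case True thus ?thesis using a by (simp add: erlang_density_def)
  next
    case False
    show ?thesis
    proof (cases "s \<le> a")
      case True
      have "min 1 (exp (s - a)) = exp (s - a)" using True by simp
      moreover have "erlang_density k 1 s * exp (s - a) = exp (-a) * s^k / fact k"
        using False by (simp add: erlang_density_def exp_diff exp_minus field_simps)
      ultimately show ?thesis using True False
        by (simp add: ennreal_mult'[symmetric] erlang_density_def)
    next
      case False
      thus ?thesis using \<open>\<not> s < 0\<close> by simp
    qed
  qed
  have "(\<integral>\<^sup>+s. ennreal (erlang_density k 1 s) * ennreal (min 1 (exp (s - a))) \<partial>lborel)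
      = (\<integral>\<^sup>+s. ennreal (erlang_density k 1 s) * indicator {a<..} s \<partial>lborel)
        + (\<integral>\<^sup>+s. ennreal (exp (-a) * s^k / fact k) * indicator {0..a} s \<partial>lborel)"
    unfolding split by (rule nn_integral_add) auto
  also have "(\<integral>\<^sup>+s. ennreal (erlang_density k 1 s) * indicator {a<..} s \<partial>lborel)
      = ennreal (1 - erlang_CDF k 1 a)"
  proof -
    have "(\<integral>\<^sup>+s. ennreal (erlang_density k 1 s) * indicator {a<..} s \<partial>lborel) = emeasure ?D {a<..}"
      by (simp add: emeasure_density)
    also have "\<dots> = ennreal (1 - measure ?D {..a})"
    proof -
      have "{a<..} = space ?D - {..a}" by auto
      thus ?thesis using D.prob_compl[of "{..a}"] by (simp add: D.emeasure_eq_measure)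
    qed
    also have "measure ?D {..a} = erlang_CDF k 1 a"
      using emeasure_erlang_density[of 1 k a] D.emeasure_eq_measure[of "{..a}"]
      by (simp add: erlang_CDF_nonneg)
    finally show ?thesis .
  qed
  also have "(\<integral>\<^sup>+s. ennreal (exp (-a) * s^k / fact k) * indicator {0..a} s \<partial>lborel)
      = ennreal (exp (-a) * a^(Suc k) / fact (Suc k))"
  proof -
    have "(\<integral>\<^sup>+s. ennreal (exp (-a) * s^k / fact k) * indicator {0..a} s \<partial>lborel)
        = ennreal (exp (-a) * a^(Suc k) / fact (Suc k) - exp (-a) * 0^(Suc k) / fact (Suc k))"
    proof (rule nn_integral_FTC_Icc[where F="\<lambda>s. exp (-a) * s^(Suc k) / fact (Suc k)"])
      fix s :: real assume s: "s \<in> {0..a}"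
      show "((\<lambda>s. exp (-a) * s^(Suc k) / fact (Suc k)) has_real_derivative exp (-a) * s^k / fact k) (at s)"
      proof (rule DERIV_cong)
        show "((\<lambda>s. exp (-a) * s^(Suc k) / fact (Suc k)) has_real_derivative
            exp (-a) * (real (Suc k) * s^k) / fact (Suc k)) (at s)"
          by (intro DERIV_cdivide DERIV_cmult) (use DERIV_pow[of "Suc k" s UNIV] in simp)
        show "exp (-a) * (real (Suc k) * s^k) / fact (Suc k) = exp (-a) * s^k / fact k"
          by (simp add: fact_Suc del: of_nat_Suc)
      qed
      show "0 \<le> exp (-a) * s^k / fact k" using s by simp
    qed (use a in auto)
    thus ?thesis by simp
  qed
  finally have eq: "(\<integral>\<^sup>+s. ennreal (erlang_density k 1 s) * ennreal (min 1 (exp (s - a))) \<partial>lborel)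
     = ennreal (1 - erlang_CDF k 1 a) + ennreal (exp (-a) * a^(Suc k) / fact (Suc k))" .
  have "ennreal (1 - erlang_CDF k 1 a + exp (-a) * a^(Suc k) / fact (Suc k))
      = ennreal (1 - erlang_CDF k 1 a) + ennreal (exp (-a) * a^(Suc k) / fact (Suc k))"
    by (rule ennreal_plus) (use erlang_CDF_le1[of k a] a in auto)
  with eq show ?thesis by simp
qed

context recs begin

lemma Ef_meas[measurable]: "Ef \<in> borel_measurable borel"
  unfolding Ef_def[abs_def] by measurable

lemma Kfact:
  assumes w: "Fb w = exp (-a)" "\<And>v. a < Ef v \<longleftrightarrow> w < v"
  shows "Fb (max w v) / Fb v = min 1 (exp (Ef v - a))"
proof -
  have e: "exp (Ef v - a) = Fb w / Fb v"
    using Fb_pos[of v] w(1) by (simp add: Ef_def exp_diff exp_minus field_simps)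
  show ?thesis
  proof (cases "w < v")
    case True
    hence "a < Ef v" using w(2) by simp
    hence "1 < exp (Ef v - a)" by simp
    thus ?thesis using True Fb_pos[of v] by simp
  next
    case False
    hence "Fb w \<le> Fb v" using Fb_mono by simp
    hence "Fb w / Fb v \<le> 1" using Fb_pos[of v] by simp
    thus ?thesis using False e by simp
  qed
qed

lemma ERL:
  assumes "n \<ge> 1"
  shows "distributed M lborel (\<lambda>x. Ef (X (rn n x) x)) (erlang_density (n - 1) 1)"
  using assms
proof (induction n rule: dec_induct)
  case base
  have r1: "rn 1 x = 1" for x by (simp add: record_idx.simps)
  show ?case
  proof (rule erlang_distributedI)
    show "(\<lambda>x. Ef (X (rn 1 x) x)) \<in> borel_measurable M" by measurable
    fix a :: real assume a: "0 \<le> a"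
    obtain w where w: "Fb w = exp (-a)" "\<And>v. a < Ef v \<longleftrightarrow> w < v" using Ef_level[OF a] by blast
    have "{x\<in>space M. Ef (X (rn 1 x) x) \<le> a} = space M - {x\<in>space M. w < X 1 x}"
    proof -
      have "Ef (X 1 x) \<le> a \<longleftrightarrow> \<not> w < X 1 x" for x using w(2)[of "X 1 x"] not_le by blast
      hence "\<And>x. Ef (X (rn 1 x) x) \<le> a \<longleftrightarrow> \<not> w < X 1 x" by (simp only: r1)
      thus ?thesis by blast
    qed
    moreover have "prob (space M - {x\<in>space M. w < X 1 x}) = 1 - prob {x\<in>space M. w < X 1 x}"
      by (rule prob_compl) measurable
    ultimately have "prob {x\<in>space M. Ef (X (rn 1 x) x) \<le> a} = 1 - prob {x\<in>space M. w < X 1 x}"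
      by simp
    also have "\<dots> = 1 - exp (-a)" by (simp add: probX_gt w(1))
    finally have "prob {x\<in>space M. Ef (X (rn 1 x) x) \<le> a} = erlang_CDF (1 - 1) 1 a"
      using a by (simp add: erlang_CDF_def)
    thus "emeasure M {x\<in>space M. Ef (X (rn 1 x) x) \<le> a} = erlang_CDF (1 - 1) 1 a"
      by (simp add: emeasure_eq_measure)
  qed simp
next
  case (step n)
  obtain k where k: "n = Suc k" using step.hyps by (cases n) auto
  show ?case
  proof (rule erlang_distributedI)
    show "(\<lambda>x. Ef (X (rn (Suc n) x) x)) \<in> borel_measurable M" by measurable
    fix a :: real assume a: "0 \<le> a"
    obtain w where w: "Fb w = exp (-a)" "\<And>v. a < Ef v \<longleftrightarrow> w < v" using Ef_level[OF a] by blast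
    have "emeasure M {x\<in>space M. w < X (rn (Suc n) x) x}
        = (\<integral>\<^sup>+x. ennreal (Fb (max w (X (rn n x) x)) / Fb (X (rn n x) x)) \<partial>M)"
      by (rule REC) (use step.hyps in simp)
    also have "\<dots> = (\<integral>\<^sup>+x. ennreal (min 1 (exp (Ef (X (rn n x) x) - a))) \<partial>M)"
      by (simp add: Kfact[OF w])
    also have "\<dots> = (\<integral>\<^sup>+s. ennreal (erlang_density (n - 1) 1 s) * ennreal (min 1 (exp (s - a))) \<partial>lborel)"
    proof (rule distributed_nn_integral[OF step.IH, symmetric])
      have "(\<lambda>s::real. min 1 (exp (s - a))) \<in> borel_measurable borel"
        by (intro borel_measurable_continuous_onI continuous_intros)
      thus "(\<lambda>s. ennreal (min 1 (exp (s - a)))) \<in> borel_measurable lborel"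
        by simp
    qed
    also have "\<dots> = ennreal (1 - erlang_CDF k 1 a + exp (-a) * a^(Suc k) / fact (Suc k))"
      using ICOMP[OF a, of k] k by simp
    finally have "ennreal (prob {x\<in>space M. w < X (rn (Suc n) x) x}) = ennreal (1 - erlang_CDF k 1 a + exp (-a) * a^(Suc k) / fact (Suc k))"
      by (simp only: emeasure_eq_measure)
    hence "prob {x\<in>space M. w < X (rn (Suc n) x) x} = 1 - erlang_CDF k 1 a + exp (-a) * a^(Suc k) / fact (Suc k)"
      by (subst (asm) ennreal_inj) (use erlang_CDF_le1[of k a] a in auto)
    moreover have "{x\<in>space M. Ef (X (rn (Suc n) x) x) \<le> a} = space M - {x\<in>space M. w < X (rn (Suc n) x) x}"
    proof -
      have "Ef (X (rn (Suc n) x) x) \<le> a \<longleftrightarrow> \<not> w < X (rn (Suc n) x) x" for x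
        using w(2)[of "X (rn (Suc n) x) x"] not_le by blast
      thus ?thesis by blast
    qed
    moreover have "prob (space M - {x\<in>space M. w < X (rn (Suc n) x) x}) = 1 - prob {x\<in>space M. w < X (rn (Suc n) x) x}"
      by (rule prob_compl) measurable
    ultimately have "prob {x\<in>space M. Ef (X (rn (Suc n) x) x) \<le> a}
        = erlang_CDF k 1 a - exp (-a) * a^(Suc k) / fact (Suc k)"
      by simp
    also have "\<dots> = erlang_CDF (Suc n - 1) 1 a"
      using a k by (simp add: erlang_CDF_def)
    finally have "prob {x\<in>space M. Ef (X (rn (Suc n) x) x) \<le> a} = erlang_CDF (Suc n - 1) 1 a" .
    thus "emeasure M {x\<in>space M. Ef (X (rn (Suc n) x) x) \<le> a} = erlang_CDF (Suc n - 1) 1 a"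
      by (simp add: emeasure_eq_measure)
  qed simp
qed

end



context recs begin

lemma fourth_moment:
  assumes n: "n \<ge> 1"
  shows "integrable M (\<lambda>x. (Ef (X (rn n x) x) - real n)^4)"
    "expectation (\<lambda>x. (Ef (X (rn n x) x) - real n)^4) = 3 * (real n)^2 + 6 * real n"
proof -
  obtain k where k: "n = Suc k" using n by (cases n) auto
  let ?Z = "\<lambda>x. Ef (X (rn n x) x)"
  have D: "distributed M lborel ?Z (erlang_density k 1)" using ERL[OF n] k by simp
  have hb: "\<And>i. has_bochner_integral M (\<lambda>x. ?Z x ^ i) (fact (k + i) / fact k)"
    using has_bochner_integral_erlang_ith_moment[OF _ D] by simp
  have f1: "fact (k + 1) / fact k = (real k + 1 :: real)" by (simp add: fact_Suc field_simps)
  have f2: "fact (k + 2) / fact k = (real k + 1) * (real k + 2 :: real)"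
  proof -
    have "k + 2 = Suc (Suc k)" by simp
    thus ?thesis by (simp only: fact_Suc) (simp add: field_simps)
  qed
  have f3: "fact (k + 3) / fact k = (real k + 1) * (real k + 2) * (real k + 3 :: real)"
  proof -
    have "k + 3 = Suc (Suc (Suc k))" by simp
    thus ?thesis by (simp only: fact_Suc) (simp add: field_simps)
  qed
  have f4: "fact (k + 4) / fact k = (real k + 1) * (real k + 2) * (real k + 3) * (real k + 4 :: real)"
  proof -
    have "k + 4 = Suc (Suc (Suc (Suc k)))" by simp
    thus ?thesis by (simp only: fact_Suc) (simp add: field_simps)
  qed
  let ?m = "real n"
  have eqf: "(\<lambda>x. (?Z x - ?m)^4) = (\<lambda>x. ?Z x ^ 4 + ((- 4 * ?m) * ?Z x ^ 3 + ((6 * ?m^2) * ?Z x ^ 2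
      + ((- 4 * ?m^3) * ?Z x ^ 1 + ?m^4 * ?Z x ^ 0))))"
    by (rule ext) (simp add: algebra_simps power2_eq_square power3_eq_cube power4_eq_xxxx)
  have H: "has_bochner_integral M (\<lambda>x. (?Z x - ?m)^4)
      (fact (k + 4) / fact k + ((- 4 * ?m) * (fact (k + 3) / fact k) + ((6 * ?m^2) * (fact (k + 2) / fact k)
      + ((- 4 * ?m^3) * (fact (k + 1) / fact k) + ?m^4 * (fact (k + 0) / fact k)))))"
    unfolding eqf
    by (intro has_bochner_integral_add has_bochner_integral_mult_right hb)
  have val: "fact (k + 4) / fact k + ((- 4 * ?m) * (fact (k + 3) / fact k) + ((6 * ?m^2) * (fact (k + 2) / fact k)
      + ((- 4 * ?m^3) * (fact (k + 1) / fact k) + ?m^4 * (fact (k + 0) / fact k))))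
      = 3 * ?m^2 + 6 * ?m"
    unfolding f1 f2 f3 f4 k by (simp add: algebra_simps power2_eq_square power3_eq_cube power4_eq_xxxx)
  show "integrable M (\<lambda>x. (?Z x - ?m)^4)" using H by (rule integrable.intros)
  show "expectation (\<lambda>x. (?Z x - ?m)^4) = 3 * ?m^2 + 6 * ?m"
    using has_bochner_integral_integral_eq[OF H] val by simp
qed

lemma tail_bound:
  assumes n: "n \<ge> 1" and e: "\<epsilon> > 0"
  shows "prob {x\<in>space M. \<epsilon> * real n \<le> \<bar>Ef (X (rn n x) x) - real n\<bar>} \<le> 9 / (\<epsilon>^4 * (real n)^2)"
proof -
  let ?Z = "\<lambda>x. Ef (X (rn n x) x)"
  let ?m = "real n"
  have m: "?m \<ge> 1" using n by simp
  have c: "0 < (\<epsilon> * ?m)^4" using e m by simp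
  have set_eq: "{x\<in>space M. \<epsilon> * ?m \<le> \<bar>?Z x - ?m\<bar>} = {x\<in>space M. (\<epsilon> * ?m)^4 \<le> (?Z x - ?m)^4}"
  proof -
    have "\<epsilon> * ?m \<le> \<bar>y\<bar> \<longleftrightarrow> (\<epsilon> * ?m)^4 \<le> y^4" for y :: real
    proof -
      have "(\<epsilon> * ?m)^4 \<le> y^4 \<longleftrightarrow> (\<epsilon> * ?m)^4 \<le> \<bar>y\<bar>^4" by (simp add: power_abs[symmetric])
      also have "\<dots> \<longleftrightarrow> \<epsilon> * ?m \<le> \<bar>y\<bar>"
        using e m by (intro power_mono_iff) auto
      finally show ?thesis ..
    qed
    thus ?thesis by blast
  qed
  have "prob {x\<in>space M. (\<epsilon> * ?m)^4 \<le> (?Z x - ?m)^4} \<le> expectation (\<lambda>x. (?Z x - ?m)^4) / (\<epsilon> * ?m)^4"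
    by (rule integral_Markov_inequality_measure[OF fourth_moment(1)[OF n], where A="space M"]) (use c in auto)
  also have "\<dots> = (3 * ?m^2 + 6 * ?m) / (\<epsilon> * ?m)^4" using fourth_moment(2)[OF n] by simp
  also have "\<dots> \<le> (9 * ?m^2) / (\<epsilon> * ?m)^4"
    using m c by (intro divide_right_mono) (auto simp: power2_eq_square)
  also have "\<dots> = 9 / (\<epsilon>^4 * ?m^2)" using m e by (simp add: field_simps power2_eq_square power4_eq_xxxx)
  finally show ?thesis using set_eq by simp
qed

end

lemma slow_pos:
  fixes M :: "'a measure" and Y :: "'a \<Rightarrow> real"
  assumes P: "prob_space M" and rv: "Y \<in> borel_measurable M"
    and slow1: "((\<lambda>u. invtail M Y (u * 1) / invtail M Y u) \<longlongrightarrow> 1) at_top"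
  shows "measure M {x\<in>space M. Y x > u} > 0"
proof (rule ccontr)
  interpret prob_space M by (rule P)
  let ?F = "\<lambda>u. measure M {x\<in>space M. Y x > u}"
  assume "\<not> ?F u > 0"
  hence F0: "?F u = 0" using measure_nonneg[of M] by (simp add: antisym not_less)
  have "?F v = 0" if "u \<le> v" for v
  proof -
    have "?F v \<le> ?F u" using that rv by (intro finite_measure_mono) auto
    thus ?thesis using F0 measure_nonneg[of M] by (simp add: antisym)
  qed
  hence ev: "eventually (\<lambda>v. invtail M Y (v * 1) / invtail M Y v = 0) at_top"
    using eventually_ge_at_top[of u]
  proof (intro eventually_mono[OF eventually_ge_at_top[of u]])
    fix v assume "u \<le> v"
    hence "?F v = 0" using \<open>\<And>v. u \<le> v \<Longrightarrow> ?F v = 0\<close> by blast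
    thus "invtail M Y (v * 1) / invtail M Y v = 0" by (simp add: invtail_def)
  qed
  have "((\<lambda>u. invtail M Y (u * 1) / invtail M Y u) \<longlongrightarrow> 0) at_top"
    by (rule tendsto_eventually[OF ev])
  from tendsto_unique[OF _ slow1 this] show False by simp
qed

theorem lemma3p4:
  fixes M :: "'a measure" and X :: "nat \<Rightarrow> 'a \<Rightarrow> real"
  assumes P: "prob_space M"
    and rv: "\<And>i. X i \<in> borel_measurable M"
    and indep: "prob_space.indep_vars M (\<lambda>_. borel) X UNIV"
    and ident: "\<And>i. distr M borel (X i) = distr M borel (X 0)"
    and pos: "AE x in M. X 0 x > 0"
    and slow: "\<And>v. v > 0 \<Longrightarrow>
        ((\<lambda>u. invtail M (X 0) (u * v) / invtail M (X 0) u) \<longlongrightarrow> 1) at_top"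
    and contL: "continuous_on UNIV (invtail M (X 0))"
    and A: "\<exists>g k. (g \<longlongrightarrow> 0) at_top
               \<and> (\<exists>u0. \<forall>x y. u0 \<le> x \<longrightarrow> x \<le> y \<longrightarrow> g y \<le> g x)
               \<and> (\<forall>v>0. ((\<lambda>u. (invtail M (X 0) (u * v) / invtail M (X 0) u - 1) / g u)
                          \<longlongrightarrow> k v) at_top)
               \<and> (\<exists>v>0. k v \<noteq> 0 \<and> (\<forall>u>0. k (u * v) \<noteq> k u))"
  shows "(\<forall>\<epsilon>>0. \<exists>c>0. \<forall>n::nat. n \<ge> 1 \<longrightarrow>
            measure M {x \<in> space M.
              ln (invtail M (X 0) (X (record_idx (\<lambda>i. X i x) n) x))
                \<notin> {real n * (1 - \<epsilon>) <..< real n * (1 + \<epsilon>)}} < c / (real n)^2)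
         \<and> (AE x in M. ((\<lambda>n. ln (invtail M (X 0) (X (record_idx (\<lambda>i. X i x) n) x)) / real n)
                          \<longlongrightarrow> 1) sequentially)"
proof -
  interpret prob_space M by (rule P)
  define Fb where "Fb u = measure M {x\<in>space M. X 0 x > u}" for u
  have Fpos: "Fb u > 0" for u
    unfolding Fb_def by (rule slow_pos[OF P rv slow]) simp
  have invF: "invtail M (X 0) u = 1 / Fb u" for u by (simp add: invtail_def Fb_def)
  have Fb_eq: "Fb = (\<lambda>u. 1 / invtail M (X 0) u)"
    using Fpos by (auto simp: invF fun_eq_iff)
  have Lnz: "invtail M (X 0) u \<noteq> 0" for u using Fpos[of u] by (simp add: invF)
  have Fcont: "continuous_on UNIV Fb"
    unfolding Fb_eq
    by (intro continuous_on_divide continuous_on_const contL) (use Lnz in auto)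
  have F0: "Fb 0 = 1"
  proof -
    have "prob {x\<in>space M. 0 < X 0 x} = 1" using pos rv by (subst prob_Collect_eq_1) auto
    thus ?thesis by (simp add: Fb_def)
  qed
  interpret R: recs M X Fb
    by unfold_locales (use rv indep ident Fpos Fcont F0 Fb_def in auto)
  have lnE: "ln (invtail M (X 0) v) = R.Ef v" for v
    using Fpos[of v] by (simp add: invF R.Ef_def ln_div)
  have set_eq: "{x \<in> space M. ln (invtail M (X 0) (X (record_idx (\<lambda>i. X i x) n) x))
                \<notin> {real n * (1 - \<epsilon>) <..< real n * (1 + \<epsilon>)}}
      = {x\<in>space M. \<epsilon> * real n \<le> \<bar>R.Ef (X (R.rn n x) x) - real n\<bar>}" for n \<epsilon>
    unfolding lnE by (auto simp: algebra_simps abs_if)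
  have part1: "\<forall>\<epsilon>>0. \<exists>c>0. \<forall>n::nat. n \<ge> 1 \<longrightarrow>
            measure M {x \<in> space M.
              ln (invtail M (X 0) (X (record_idx (\<lambda>i. X i x) n) x))
                \<notin> {real n * (1 - \<epsilon>) <..< real n * (1 + \<epsilon>)}} < c / (real n)^2"
  proof (intro allI impI)
    fix \<epsilon> :: real assume e: "\<epsilon> > 0"
    show "\<exists>c>0. \<forall>n::nat. n \<ge> 1 \<longrightarrow>
            measure M {x \<in> space M.
              ln (invtail M (X 0) (X (record_idx (\<lambda>i. X i x) n) x))
                \<notin> {real n * (1 - \<epsilon>) <..< real n * (1 + \<epsilon>)}} < c / (real n)^2"
    proof (intro exI[of _ "10 / \<epsilon>^4"] conjI allI impI)
      show "0 < 10 / \<epsilon>^4" using e by simp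
      fix n :: nat assume n: "n \<ge> 1"
      have "measure M {x\<in>space M. \<epsilon> * real n \<le> \<bar>R.Ef (X (R.rn n x) x) - real n\<bar>}
          \<le> 9 / (\<epsilon>^4 * (real n)^2)" by (rule R.tail_bound[OF n e])
      also have "\<dots> < 10 / \<epsilon>^4 / (real n)^2" using e n by (simp add: field_simps)
      finally show "measure M {x \<in> space M.
              ln (invtail M (X 0) (X (record_idx (\<lambda>i. X i x) n) x))
                \<notin> {real n * (1 - \<epsilon>) <..< real n * (1 + \<epsilon>)}} < 10 / \<epsilon>^4 / (real n)^2"
        unfolding set_eq .
    qed
  qed
  have BC: "AE x in M. eventually (\<lambda>n. \<bar>R.Ef (X (R.rn (Suc n) x) x) - real (Suc n)\<bar>
              < real (Suc n) / real (Suc m)) sequentially" for m :: nat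
  proof -
    define e where "e = 1 / real (Suc m)"
    have e: "e > 0" by (simp add: e_def)
    define B where "B n = {x\<in>space M. e * real (Suc n) \<le> \<bar>R.Ef (X (R.rn (Suc n) x) x) - real (Suc n)\<bar>}" for n
    have Bm: "B n \<in> sets M" for n unfolding B_def by measurable
    have bnd: "measure M (B n) \<le> 9 / e^4 * inverse (real (Suc n) ^ 2)" for n
      using R.tail_bound[of "Suc n" e] e by (simp add: B_def field_simps)
    have "summable (\<lambda>n. 9 / e^4 * inverse (real (Suc n) ^ 2))"
      by (intro summable_mult summable_Suc_iff[THEN iffD2] inverse_power_summable) simp
    hence sB: "summable (\<lambda>n. measure M (B n))"
      by (rule summable_comparison_test'[where N=0]) (use bnd in simp)
    have "AE x in M. eventually (\<lambda>n. x \<in> space M - B n) sequentially"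
      by (rule borel_cantelli_AE1[OF Bm _ sB]) (simp add: emeasure_eq_measure)
    thus ?thesis
    proof (rule eventually_mono)
      fix x assume "eventually (\<lambda>n. x \<in> space M - B n) sequentially"
      thus "eventually (\<lambda>n. \<bar>R.Ef (X (R.rn (Suc n) x) x) - real (Suc n)\<bar>
              < real (Suc n) / real (Suc m)) sequentially"
        by (rule eventually_mono) (auto simp: B_def e_def not_le)
    qed
  qed
  have "AE x in M. \<forall>m::nat. eventually (\<lambda>n. \<bar>R.Ef (X (R.rn (Suc n) x) x) - real (Suc n)\<bar>
              < real (Suc n) / real (Suc m)) sequentially"
    using BC by (subst AE_all_countable) auto
  hence part2: "AE x in M. ((\<lambda>n. ln (invtail M (X 0) (X (record_idx (\<lambda>i. X i x) n) x)) / real n)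
                          \<longlongrightarrow> 1) sequentially"
  proof (rule eventually_mono)
    fix x assume H: "\<forall>m::nat. eventually (\<lambda>n. \<bar>R.Ef (X (R.rn (Suc n) x) x) - real (Suc n)\<bar>
              < real (Suc n) / real (Suc m)) sequentially"
    let ?f = "\<lambda>n. ln (invtail M (X 0) (X (record_idx (\<lambda>i. X i x) n) x)) / real n"
    have "(\<lambda>n. ?f (Suc n)) \<longlonglongrightarrow> 1"
    proof (rule tendstoI)
      fix r :: real assume r: "r > 0"
      obtain m where m: "inverse (real (Suc m)) < r" using reals_Archimedean[OF r] by blast
      show "eventually (\<lambda>n. dist (?f (Suc n)) 1 < r) sequentially"
        using H[rule_format, of m]
      proof (rule eventually_mono)
        fix n assume h: "\<bar>R.Ef (X (R.rn (Suc n) x) x) - real (Suc n)\<bar> < real (Suc n) / real (Suc m)"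
        have "dist (?f (Suc n)) 1 = \<bar>R.Ef (X (R.rn (Suc n) x) x) - real (Suc n)\<bar> / real (Suc n)"
          by (simp add: lnE dist_real_def field_simps del: of_nat_Suc)
        also have "\<dots> < 1 / real (Suc m)"
          using h by (simp add: field_simps del: of_nat_Suc)
        also have "\<dots> < r" using m by (simp add: inverse_eq_divide)
        finally show "dist (?f (Suc n)) 1 < r" .
      qed
    qed
    thus "?f \<longlonglongrightarrow> 1" by (rule LIMSEQ_imp_Suc)
  qed
  show ?thesis using part1 part2 by blast
qed

end
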